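(* Let $u = v$ be a context equation over a ranked signature $\Sigma$ whose letters have maximal arity $k$. Then (1) for every solution $\sigma$ of $u=v$ there is a solution $\sigma'$ that is a simpler equivalent of $\sigma$ such that for each $k'=0,1,\dots,k$, $\sigma'$ uses at most one letter of arity $k'$ that does not occur in $u=v$; (2) for every solution $\sigma$ there exists a solution $\sigma'$ that uses only unary letters occurring in $u = v$ and satisfies $|\sigma'(u)|\le|\sigma(u)|$.
   Context: $\Omega$ is a special constant not in $\Sigma$; context variables have arity $1$, variables arity $0$. Ground terms are finite ordered trees over $\Sigma$ with each node labelled $f$ having $\mathrm{ar}(f)$ children; ground contexts are ground terms over $\Sigma\cup\{\Omega\}$ with exactly one $\Omega$; $st$ replaces $\Omega$ in the ground context $s$ by $t$. Terms are well-formed trees over $\Sigma$, variables and context variables; a context equation is $u=v$ with $u,v$ terms. A substitution $\sigma$ assigns a ground context to each context variable and a ground term to each variable, extended by $\sigma(a)=a$, $\sigma(f(t_1,\dots,t_m))=f(\sigma(t_1),\dots,\sigma(t_m))$, $\sigma(Xt)=\sigma(X)\sigma(t)$; it is a solution if $\sigma(u)=\sigma(v)$. A letter is used by $\sigma$ if it occurs in some $\sigma(X)$ or $\sigma(x)$. For solutions $\sigma,\sigma'$, $\sigma'$ is a simpler equivalent of $\sigma$ if there is an arity-preserving map $h$ on letters such that each $\sigma'(X)$, $\sigma'(x)$ is obtained from $\sigma(X)$, $\sigma(x)$ by replacing every letter $a$ by $h(a)$. $|\cdot|$ is the number of nodes. Unary letters have arity $1$. *)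

theory Defs
  imports Main
begin

text \<open>Ground terms over the signature are
  trees labelled by letters of type 'f; ground contexts are trees labelled by
  'f option, where None plays the role of the special constant Omega.\<close>

datatype 'f gterm = GFun 'f "'f gterm list"

fun wf_gt :: "'a set \<Rightarrow> ('a \<Rightarrow> nat) \<Rightarrow> 'a gterm \<Rightarrow> bool" where
  "wf_gt S ar (GFun f ts) = (f \<in> S \<and> length ts = ar f \<and> (\<forall>t\<in>set ts. wf_gt S ar t))"

fun gsize :: "'a gterm \<Rightarrow> nat" where
  "gsize (GFun f ts) = 1 + sum_list (map gsize ts)"

fun count_label :: "'a \<Rightarrow> 'a gterm \<Rightarrow> nat" where
  "count_label a (GFun f ts) = (if f = a then 1 else 0) + sum_list (map (count_label a) ts)"

definition ground_term :: "'f set \<Rightarrow> ('f \<Rightarrow> nat) \<Rightarrow> 'f gterm \<Rightarrow> bool" where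
  "ground_term Sg ar t = wf_gt Sg ar t"

definition ground_ctx :: "'f set \<Rightarrow> ('f \<Rightarrow> nat) \<Rightarrow> 'f option gterm \<Rightarrow> bool" where
  "ground_ctx Sg ar C =
     (wf_gt (Some ` Sg \<union> {None}) (case_option 0 ar) C \<and> count_label None C = 1)"

fun fill :: "'f option gterm \<Rightarrow> 'f gterm \<Rightarrow> 'f gterm" where
  "fill (GFun None ts) t = t"
| "fill (GFun (Some f) ts) t = GFun f (map (\<lambda>s. fill s t) ts)"

datatype ('f, 'x, 'c) trm = Fn 'f "('f, 'x, 'c) trm list" | Var 'x | CVar 'c "('f, 'x, 'c) trm"

fun wf_trm :: "'f set \<Rightarrow> ('f \<Rightarrow> nat) \<Rightarrow> ('f, 'x, 'c) trm \<Rightarrow> bool" where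
  "wf_trm S ar (Fn f ts) = (f \<in> S \<and> length ts = ar f \<and> (\<forall>t\<in>set ts. wf_trm S ar t))"
| "wf_trm S ar (Var x) = True"
| "wf_trm S ar (CVar X t) = wf_trm S ar t"

fun letters :: "('f, 'x, 'c) trm \<Rightarrow> 'f set" where
  "letters (Fn f ts) = insert f (\<Union>t\<in>set ts. letters t)"
| "letters (Var x) = {}"
| "letters (CVar X t) = letters t"

definition wf_subst :: "'f set \<Rightarrow> ('f \<Rightarrow> nat) \<Rightarrow> ('c \<Rightarrow> 'f option gterm) \<Rightarrow> ('x \<Rightarrow> 'f gterm) \<Rightarrow> bool" where
  "wf_subst Sg ar sc sv = ((\<forall>X. ground_ctx Sg ar (sc X)) \<and> (\<forall>x. ground_term Sg ar (sv x)))"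

fun apply_subst :: "('c \<Rightarrow> 'f option gterm) \<Rightarrow> ('x \<Rightarrow> 'f gterm) \<Rightarrow> ('f, 'x, 'c) trm \<Rightarrow> 'f gterm" where
  "apply_subst sc sv (Fn f ts) = GFun f (map (apply_subst sc sv) ts)"
| "apply_subst sc sv (Var x) = sv x"
| "apply_subst sc sv (CVar X t) = fill (sc X) (apply_subst sc sv t)"

definition is_solution :: "'f set \<Rightarrow> ('f \<Rightarrow> nat) \<Rightarrow> ('f, 'x, 'c) trm \<Rightarrow> ('f, 'x, 'c) trm
    \<Rightarrow> ('c \<Rightarrow> 'f option gterm) \<Rightarrow> ('x \<Rightarrow> 'f gterm) \<Rightarrow> bool" where
  "is_solution Sg ar u v sc sv =
     (wf_subst Sg ar sc sv \<and> apply_subst sc sv u = apply_subst sc sv v)"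

definition uses :: "('c \<Rightarrow> 'f option gterm) \<Rightarrow> ('x \<Rightarrow> 'f gterm) \<Rightarrow> 'f \<Rightarrow> bool" where
  "uses sc sv a = ((\<exists>X. Some a \<in> set_gterm (sc X)) \<or> (\<exists>x. a \<in> set_gterm (sv x)))"

definition simpler_equiv :: "'f set \<Rightarrow> ('f \<Rightarrow> nat)
    \<Rightarrow> ('c \<Rightarrow> 'f option gterm) \<Rightarrow> ('x \<Rightarrow> 'f gterm)
    \<Rightarrow> ('c \<Rightarrow> 'f option gterm) \<Rightarrow> ('x \<Rightarrow> 'f gterm) \<Rightarrow> bool" where
  "simpler_equiv Sg ar sc' sv' sc sv =
     (\<exists>h. (\<forall>a\<in>Sg. h a \<in> Sg \<and> ar (h a) = ar a)
        \<and> (\<forall>X. sc' X = map_gterm (map_option h) (sc X))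
        \<and> (\<forall>x. sv' x = map_gterm h (sv x)))"

end

theory Submission
  imports Defs
begin

function er :: "('a \<Rightarrow> bool) \<Rightarrow> 'a gterm \<Rightarrow> 'a gterm" where
  "er P (GFun f ts) = (if P f \<and> length ts = 1 then er P (hd ts) else GFun f (map (er P) ts))"
  by pat_completeness auto
lemma size_mem_lt: "x \<in> set ts \<Longrightarrow> size x < Suc (size_list size ts)"
  by (induction ts) auto

termination
  by (relation "measure (\<lambda>(P,t). size t)") (auto simp: length_Suc_conv size_mem_lt)

lemma er_fill: "er P (fill C t) = fill (er (case_option False P) C) (er P t)"
  by (induction C t rule: fill.induct) (auto simp: length_Suc_conv comp_def)

lemma er_subst: "\<forall>f\<in>letters t. \<not> P f \<Longrightarrow>
  er P (apply_subst sc sv t) = apply_subst (\<lambda>X. er (case_option False P) (sc X)) (\<lambda>x. er P (sv x)) t"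
  by (induction t) (auto simp: er_fill)

lemma er_wf: "wf_gt S a t \<Longrightarrow> wf_gt S a (er P t)"
  by (induction t) (auto simp: length_Suc_conv)

lemma er_count: "\<not> P a \<Longrightarrow> count_label a (er P t) = count_label a t"
  by (induction t) (auto simp: length_Suc_conv comp_def intro!: arg_cong[where f=sum_list])

lemma er_size: "gsize (er P t) \<le> gsize t"
proof (induction t)
  case (GFun f ts)
  have m: "sum_list (map (gsize \<circ> er P) ts) \<le> sum_list (map gsize ts)"
    by (rule sum_list_mono) (use GFun in auto)
  show ?case
  proof (cases "P f \<and> length ts = 1")
    case True then obtain s where "ts = [s]" by (auto simp: length_Suc_conv)
    with GFun show ?thesis by auto
  next
    case False with m show ?thesis by auto
  qed
qed

lemma er_set: "wf_gt S a t \<Longrightarrow> (\<forall>f. P f \<longrightarrow> a f = 1) \<Longrightarrow> b \<in> set_gterm (er P t) \<Longrightarrow> \<not> P b"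
  by (induction t) (auto simp: length_Suc_conv split: if_splits)

lemma wf_set: "wf_gt S a t \<Longrightarrow> set_gterm t \<subseteq> S"
  by (induction t) auto

lemma map_fill: "fill (map_gterm (map_option h) C) (map_gterm h t) = map_gterm h (fill C t)"
  by (induction C t rule: fill.induct) auto

lemma map_subst: "\<forall>f\<in>letters t. h f = f \<Longrightarrow>
  apply_subst (\<lambda>X. map_gterm (map_option h) (sc X)) (\<lambda>x. map_gterm h (sv x)) t = map_gterm h (apply_subst sc sv t)"
  by (induction t) (auto simp: map_fill)

lemma map_wf: "wf_gt S a t \<Longrightarrow> (\<forall>x\<in>S. h x \<in> S \<and> a (h x) = a x) \<Longrightarrow> wf_gt S a (map_gterm h t)"
  by (induction t) auto

lemma map_count: "count_label None (map_gterm (map_option h) C) = count_label None C"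
  by (induction C) (auto simp: comp_def intro!: arg_cong[where f=sum_list] split: option.splits)

theorem lemma3p7:
  fixes Sg :: "'f set" and ar :: "'f \<Rightarrow> nat" and k :: nat
    and u v :: "('f, 'x, 'c) trm"
  assumes max_ar: "\<forall>a\<in>Sg. ar a \<le> k"
    and k_attained: "\<exists>a\<in>Sg. ar a = k"
    and wf_u: "wf_trm Sg ar u" and wf_v: "wf_trm Sg ar v"
  shows "(\<forall>sc sv. is_solution Sg ar u v sc sv \<longrightarrow>
            (\<exists>sc' sv'. is_solution Sg ar u v sc' sv'
               \<and> simpler_equiv Sg ar sc' sv' sc sv
               \<and> (\<forall>k'\<le>k. \<forall>a b.
                    uses sc' sv' a \<and> ar a = k' \<and> a \<notin> letters u \<union> letters v \<and>
                    uses sc' sv' b \<and> ar b = k' \<and> b \<notin> letters u \<union> letters v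
                    \<longrightarrow> a = b)))
       \<and> (\<forall>sc sv. is_solution Sg ar u v sc sv \<longrightarrow>
            (\<exists>sc' sv'. is_solution Sg ar u v sc' sv'
               \<and> (\<forall>a. uses sc' sv' a \<and> ar a = 1 \<longrightarrow> a \<in> letters u \<union> letters v)
               \<and> gsize (apply_subst sc' sv' u) \<le> gsize (apply_subst sc sv u)))"
  proof (intro conjI allI impI)
  let ?L = "letters u \<union> letters v"
  fix sc sv assume sol: "is_solution Sg ar u v sc sv"
  hence wfs: "\<And>X. ground_ctx Sg ar (sc X)" "\<And>x. ground_term Sg ar (sv x)"
    and eq: "apply_subst sc sv u = apply_subst sc sv v"
    by (auto simp: is_solution_def wf_subst_def)
  {
    define c where "c n = (SOME b. b \<in> Sg \<and> ar b = n \<and> b \<notin> ?L)" for n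
    define h where "h a = (if a \<in> ?L \<or> a \<notin> Sg then a else c (ar a))" for a
    have hc: "h a \<in> Sg \<and> ar (h a) = ar a \<and> h a \<notin> ?L" if "a \<in> Sg" "a \<notin> ?L" for a
    proof -
      have "\<exists>b. b \<in> Sg \<and> ar b = ar a \<and> b \<notin> ?L" using that by blast
      hence "c (ar a) \<in> Sg \<and> ar (c (ar a)) = ar a \<and> c (ar a) \<notin> ?L"
        unfolding c_def by (rule someI_ex)
      thus ?thesis using that by (simp add: h_def)
    qed
    have hS: "\<forall>a\<in>Sg. h a \<in> Sg \<and> ar (h a) = ar a"
      using hc by (auto simp: h_def)
    have hL: "\<forall>f\<in>?L. h f = f" by (auto simp: h_def)
    define sc' where "sc' X = map_gterm (map_option h) (sc X)" for X
    define sv' where "sv' x = map_gterm h (sv x)" for x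
    have hS': "\<forall>x\<in>Some ` Sg \<union> {None}. map_option h x \<in> Some ` Sg \<union> {None} \<and>
        case_option 0 ar (map_option h x) = case_option 0 ar x"
      using hS by auto
    have wf': "wf_subst Sg ar sc' sv'"
      using wfs unfolding wf_subst_def ground_ctx_def ground_term_def sc'_def sv'_def
      using map_wf[OF _ hS] map_wf[OF _ hS'] map_count by metis
    have su: "apply_subst sc' sv' u = map_gterm h (apply_subst sc sv u)"
      unfolding sc'_def sv'_def by (rule map_subst) (use hL in auto)
    have sv: "apply_subst sc' sv' v = map_gterm h (apply_subst sc sv v)"
      unfolding sc'_def sv'_def by (rule map_subst) (use hL in auto)
    have usesh: "\<exists>b\<in>Sg. a = h b" if "uses sc' sv' a" for a
    proof -
      from that consider X where "Some a \<in> set_gterm (sc' X)" | x where "a \<in> set_gterm (sv' x)"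
        unfolding uses_def by blast
      thus ?thesis
      proof cases
        case (1 X)
        then obtain b where b: "b \<in> set_gterm (sc X)" "Some a = map_option h b"
          by (auto simp: sc'_def gterm.set_map)
        have "set_gterm (sc X) \<subseteq> Some ` Sg \<union> {None}"
          using wfs(1)[of X] wf_set unfolding ground_ctx_def by blast
        moreover have "b \<noteq> None" using b(2) by (cases b) auto
        ultimately have "b \<in> Some ` Sg" using b(1) by auto
        then obtain b' where "b = Some b'" "b' \<in> Sg" by (rule imageE) simp
        with b show ?thesis by auto
      next
        case (2 x)
        then obtain b where b: "b \<in> set_gterm (sv x)" "a = h b"
          by (auto simp: sv'_def gterm.set_map)
        have "set_gterm (sv x) \<subseteq> Sg"
          using wfs(2)[of x] wf_set unfolding ground_term_def by blast
        with b show ?thesis by auto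
      qed
    qed
    have one: "a = c (ar a)" if A: "uses sc' sv' a" "a \<notin> ?L" for a
    proof -
      obtain b where b: "b \<in> Sg" "a = h b" using usesh[OF A(1)] by blast
      have bL: "b \<notin> ?L"
      proof
        assume "b \<in> ?L"
        hence "h b = b" by (simp add: h_def)
        thus False using b A(2) \<open>b \<in> ?L\<close> by simp
      qed
      have "a = c (ar b)" using b bL by (simp add: h_def)
      moreover have "ar a = ar b" using hc[OF b(1) bL] b(2) by simp
      ultimately show ?thesis by simp
    qed
    show "\<exists>sc' sv'. is_solution Sg ar u v sc' sv'
               \<and> simpler_equiv Sg ar sc' sv' sc sv
               \<and> (\<forall>k'\<le>k. \<forall>a b.
                    uses sc' sv' a \<and> ar a = k' \<and> a \<notin> letters u \<union> letters v \<and>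
                    uses sc' sv' b \<and> ar b = k' \<and> b \<notin> letters u \<union> letters v
                    \<longrightarrow> a = b)"
    proof (intro exI conjI allI impI)
      show "is_solution Sg ar u v sc' sv'" using wf' su sv eq by (simp add: is_solution_def)
      show "simpler_equiv Sg ar sc' sv' sc sv" unfolding simpler_equiv_def
        using hS sc'_def sv'_def by blast
    next
      fix k' a b assume "uses sc' sv' a \<and> ar a = k' \<and> a \<notin> ?L \<and>
                    uses sc' sv' b \<and> ar b = k' \<and> b \<notin> ?L"
      thus "a = b" using one by metis
    qed
  }
  {
    define P where "P a = (ar a = 1 \<and> a \<notin> ?L)" for a
    define P' where "P' = case_option False P"
    define sc' where "sc' X = er P' (sc X)" for X
    define sv' where "sv' x = er P (sv x)" for x
    have wf': "wf_subst Sg ar sc' sv'"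
    proof -
      have "er_c": "count_label None (er P' C) = count_label None C" for C
        by (rule er_count) (simp add: P'_def)
      show ?thesis using wfs er_wf er_c
        unfolding wf_subst_def ground_ctx_def ground_term_def sc'_def sv'_def by metis
    qed
    have su: "er P (apply_subst sc sv u) = apply_subst sc' sv' u"
      unfolding sc'_def sv'_def P'_def by (rule er_subst) (auto simp: P_def)
    have sv: "er P (apply_subst sc sv v) = apply_subst sc' sv' v"
      unfolding sc'_def sv'_def P'_def by (rule er_subst) (auto simp: P_def)
    show "\<exists>sc' sv'. is_solution Sg ar u v sc' sv'
               \<and> (\<forall>a. uses sc' sv' a \<and> ar a = 1 \<longrightarrow> a \<in> letters u \<union> letters v)
               \<and> gsize (apply_subst sc' sv' u) \<le> gsize (apply_subst sc sv u)"
    proof (intro exI conjI allI impI)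
      show "is_solution Sg ar u v sc' sv'" using wf' su sv eq by (simp add: is_solution_def)
      show "gsize (apply_subst sc' sv' u) \<le> gsize (apply_subst sc sv u)"
        using su er_size by metis
    next
      fix a assume a: "uses sc' sv' a \<and> ar a = 1"
      then consider X where "Some a \<in> set_gterm (sc' X)" | x where "a \<in> set_gterm (sv' x)"
        unfolding uses_def by blast
      hence "\<not> P a"
      proof cases
        case (1 X)
        have "\<not> P' (Some a)"
          by (rule er_set[of _ "case_option 0 ar" "sc X"])
             (use wfs(1)[of X] 1 in \<open>auto simp: ground_ctx_def sc'_def P'_def P_def split: option.splits\<close>)
        thus ?thesis by (simp add: P'_def)
      next
        case (2 x)
        show ?thesis
          by (rule er_set[of Sg ar "sv x" P])
             (use wfs(2)[of x] 2 in \<open>auto simp: ground_term_def sv'_def P_def[abs_def]\<close>)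
      qed
      with a show "a \<in> ?L" by (simp add: P_def)
    qed
  }
qed

end
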